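(* Let $n$ be a positive odd integer and let $G$ be a finite group. Then $P_e(G)\cong P_e(Q_8\times\mathbb{Z}_n)$ if and only if $G\cong Q_8\times\mathbb{Z}_n$.
   Context: All groups are finite. $Q_8$ is the quaternion group of order $8$ and $\mathbb{Z}_n$ the cyclic group of order $n$. For a group $X$, the enhanced power graph $P_e(X)$ is the simple graph with vertex set $X$ in which two distinct vertices $x,y$ are adjacent if and only if $\langle x,y\rangle$ is cyclic. *)

theory Defs
  imports "HOL-Algebra.Algebra"
begin

definition pe_adj :: "('a, 'b) monoid_scheme \<Rightarrow> 'a \<Rightarrow> 'a \<Rightarrow> bool" where
  "pe_adj G x y \<longleftrightarrow> x \<noteq> y \<and> cyclic_group (subgroup_generated G {x, y})"

definition pe_graph_iso :: "('a, 'b) monoid_scheme \<Rightarrow> ('c, 'd) monoid_scheme \<Rightarrow> bool" where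
  "pe_graph_iso G H \<longleftrightarrow> (\<exists>f. bij_betw f (carrier G) (carrier H) \<and>
      (\<forall>x\<in>carrier G. \<forall>y\<in>carrier G. pe_adj G x y \<longleftrightarrow> pe_adj H (f x) (f y)))"

text \<open>Quaternion group Q8: elements (s, u), s = True means sign -1,
  u = 0,1,2,3 stands for 1, i, j, k.\<close>
definition q_unit_mult :: "nat \<Rightarrow> nat \<Rightarrow> bool \<times> nat" where
  "q_unit_mult a b =
     (if a = 0 then (False, b)
      else if b = 0 then (False, a)
      else if a = b then (True, 0)
      else (b \<noteq> a mod 3 + 1, 6 - a - b))"

definition Q8 :: "(bool \<times> nat) monoid" where
  "Q8 = \<lparr>carrier = UNIV \<times> {0..<4},
         monoid.mult = (\<lambda>(s, a) (t, b). (s \<noteq> (t \<noteq> fst (q_unit_mult a b)), snd (q_unit_mult a b))),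
         one = (False, 0)\<rparr>"

end

theory Submission
  imports Defs
begin

context group begin

lemma gen_self: "g \<in> carrier G \<Longrightarrow> g \<in> generate G {g}"
  by (simp add: generate.incl)

lemma gen_carrier: "g \<in> carrier G \<Longrightarrow> generate G {g} \<subseteq> carrier G"
  by (simp add: generate_incl)

lemma gen_sub: "g \<in> carrier G \<Longrightarrow> subgroup (generate G {g}) G"
  by (simp add: generate_is_subgroup)

lemma gen_mono: "g \<in> carrier G \<Longrightarrow> x \<in> generate G {g} \<Longrightarrow> generate G {x} \<subseteq> generate G {g}"
  by (simp add: gen_sub generate_subgroup_incl)

lemma gen_pow_nat:
  assumes "finite (carrier G)" "g \<in> carrier G" "x \<in> generate G {g}"
  shows "\<exists>k::nat. x = g [^] k"
  using generate_pow_on_finite_carrier[OF assms(1,2)] assms(3) by auto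

lemma sub_nat_pow: "subgroup H G \<Longrightarrow> h \<in> H \<Longrightarrow> h [^] (k::nat) \<in> H"
  using subgroup_int_pow_closed[of H h "int k"] by (simp add: int_pow_int)

lemma pow_in_gen: "g \<in> carrier G \<Longrightarrow> g [^] (k::nat) \<in> generate G {g}"
  using gen_sub gen_self sub_nat_pow by blast

lemma gen_comm:
  assumes "finite (carrier G)" "g \<in> carrier G" "x \<in> generate G {g}" "y \<in> generate G {g}"
  shows "x \<otimes> y = y \<otimes> x"
proof -
  obtain a b :: nat where "x = g [^] a" "y = g [^] b" using gen_pow_nat assms by metis
  then show ?thesis using assms(2) by (simp add: nat_pow_mult add.commute)
qed

lemma cyc_sub:
  assumes fin: "finite (carrier G)" and g: "g \<in> carrier G"
    and K: "subgroup K G" "K \<subseteq> generate G {g}"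
  shows "\<exists>h\<in>carrier G. K = generate G {h}"
proof -
  have o: "ord g \<ge> 1" using ord_ge_1[OF fin g] .
  have "0 < ord g \<and> g [^] ord g \<in> K"
    using o pow_ord_eq_1[OF g] subgroup.one_closed[OF K(1)] by simp
  then have ex: "\<exists>m::nat. 0 < m \<and> g [^] m \<in> K" by blast
  define m where "m = (LEAST m::nat. 0 < m \<and> g [^] m \<in> K)"
  have m: "0 < m" "g [^] m \<in> K" using LeastI_ex[OF ex] unfolding m_def by auto
  have mmin: "\<And>r::nat. 0 < r \<Longrightarrow> r < m \<Longrightarrow> g [^] r \<notin> K"
    using not_less_Least unfolding m_def by blast
  have hc: "g [^] m \<in> carrier G" using g by simp
  have "K = generate G {g [^] m}"
  proof
    show "generate G {g [^] m} \<subseteq> K" using m K by (simp add: generate_subgroup_incl)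
  next
    show "K \<subseteq> generate G {g [^] m}"
    proof
      fix x assume xK: "x \<in> K"
      then obtain j :: nat where j: "x = g [^] j" using gen_pow_nat[OF fin g] K by blast
      define q r where "q = j div m" and "r = j mod m"
      have jqr: "j = m * q + r" unfolding q_def r_def by simp
      have gj: "g [^] j = (g [^] m) [^] q \<otimes> g [^] r"
        using g by (simp add: jqr nat_pow_mult nat_pow_pow)
      have "g [^] r = inv ((g [^] m) [^] q) \<otimes> g [^] j"
        using g gj by (simp add: inv_solve_left nat_pow_closed)
      moreover have "inv ((g [^] m) [^] q) \<in> K"
        using K m by (simp add: subgroup.m_inv_closed sub_nat_pow)
      ultimately have "g [^] r \<in> K" using xK j K by (simp add: subgroup.m_closed)
      then have "r = 0" using mmin[of r] m unfolding r_def by auto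
      then have "x = (g [^] m) [^] q" using j gj g by simp
      then show "x \<in> generate G {g [^] m}" using hc pow_in_gen by simp
    qed
  qed
  then show ?thesis using hc by blast
qed

lemma cyclic_iff:
  assumes fin: "finite (carrier G)" and x: "x \<in> carrier G" and y: "y \<in> carrier G"
  shows "cyclic_group (subgroup_generated G {x, y}) \<longleftrightarrow>
         (\<exists>g\<in>carrier G. x \<in> generate G {g} \<and> y \<in> generate G {g})"
proof
  let ?K = "subgroup_generated G {x, y}"
  have cK: "carrier ?K = generate G {x, y}"
    using x y by (simp add: carrier_subgroup_generated Int_absorb1)
  have gK: "group ?K" by simp
  assume "cyclic_group ?K"
  then obtain w where w: "w \<in> carrier ?K" "carrier ?K = range (\<lambda>n::int. w [^]\<^bsub>?K\<^esub> n)"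
    using group.cyclic_group[OF gK] by blast
  have wG: "w \<in> carrier G" using w(1) cK generate_incl[of "{x,y}"] x y by auto
  have r: "carrier ?K = range (\<lambda>n::int. w [^] n)"
    using w(2) int_pow_subgroup_generated[OF w(1)] by simp
  have "x \<in> carrier ?K" "y \<in> carrier ?K" using cK by (auto intro: generate.incl)
  then have "x \<in> generate G {w}" "y \<in> generate G {w}"
    using r generate_pow[OF wG] by auto
  then show "\<exists>g\<in>carrier G. x \<in> generate G {g} \<and> y \<in> generate G {g}" using wG by blast
next
  let ?K = "subgroup_generated G {x, y}"
  have cK: "carrier ?K = generate G {x, y}"
    using x y by (simp add: carrier_subgroup_generated Int_absorb1)
  have gK: "group ?K" by simp
  assume "\<exists>g\<in>carrier G. x \<in> generate G {g} \<and> y \<in> generate G {g}"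
  then obtain g where g: "g \<in> carrier G" "x \<in> generate G {g}" "y \<in> generate G {g}" by blast
  have "generate G {x, y} \<subseteq> generate G {g}"
    using g by (simp add: gen_sub generate_subgroup_incl)
  moreover have "subgroup (generate G {x, y}) G" using x y by (simp add: generate_is_subgroup)
  ultimately obtain h where h: "h \<in> carrier G" "generate G {x, y} = generate G {h}"
    using cyc_sub[OF fin g(1)] by blast
  have hK: "h \<in> carrier ?K" using cK h gen_self by auto
  have "carrier ?K = range (\<lambda>n::int. h [^]\<^bsub>?K\<^esub> n)"
    unfolding int_pow_subgroup_generated[OF hK] using cK h generate_pow[OF h(1)]
    by (simp add: full_SetCompr_eq)
  then show "cyclic_group ?K" using group.cyclic_group[OF gK] hK by blast
qed

lemma adj_iff:
  assumes fin: "finite (carrier G)" and x: "x \<in> carrier G" and y: "y \<in> carrier G"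
  shows "pe_adj G x y \<longleftrightarrow> x \<noteq> y \<and> (\<exists>g\<in>carrier G. x \<in> generate G {g} \<and> y \<in> generate G {g})"
  using cyclic_iff[OF assms] unfolding pe_adj_def by blast

lemma adj_comm:
  assumes "pe_adj G x y" "x \<in> carrier G" "y \<in> carrier G" "finite (carrier G)"
  shows "x \<otimes> y = y \<otimes> x"
  using assms adj_iff gen_comm by blast

end

lemma iso_graph_iso:
  assumes "group G" "group H" "G \<cong> H"
  shows "pe_graph_iso G H"
proof -
  obtain h where h: "h \<in> iso G H" using assms(3) unfolding is_iso_def by blast
  have hh: "group_hom G H h" using h assms by (simp add: group_hom_def group_hom_axioms_def iso_def)
  have bij: "bij_betw h (carrier G) (carrier H)" using h by (simp add: iso_def)
  have "pe_adj G x y \<longleftrightarrow> pe_adj H (h x) (h y)" if "x \<in> carrier G" "y \<in> carrier G" for x y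
  proof -
    have "x \<noteq> y \<longleftrightarrow> h x \<noteq> h y" using bij that by (metis bij_betw_def inj_on_def)
    moreover have "h \<in> iso (subgroup_generated G {x,y}) (subgroup_generated H {h x, h y})"
      using group_hom.iso_between_subgroups[OF hh h, of "{x,y}" "{h x, h y}"] that by auto
    then have "cyclic_group (subgroup_generated G {x,y}) \<longleftrightarrow> cyclic_group (subgroup_generated H {h x, h y})"
      using isomorphic_group_cyclicity[of "subgroup_generated G {x,y}" "subgroup_generated H {h x, h y}"]
        assms by (auto simp: is_iso_def group.group_subgroup_generated)
    ultimately show ?thesis unfolding pe_adj_def by blast
  qed
  then show ?thesis unfolding pe_graph_iso_def using bij by blast
qed

lemma four_cases: "(a::nat) < 4 \<Longrightarrow> a = 0 \<or> a = 1 \<or> a = 2 \<or> a = 3" by auto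

lemma Q8_mult: "(s, a) \<otimes>\<^bsub>Q8\<^esub> (t, b) = (s \<noteq> (t \<noteq> fst (q_unit_mult a b)), snd (q_unit_mult a b))"
  by (simp add: Q8_def)

lemma Q8_one: "\<one>\<^bsub>Q8\<^esub> = (False, 0)" by (simp add: Q8_def)

lemma Q8_carrier: "carrier Q8 = UNIV \<times> {0..<4}" by (simp add: Q8_def)

lemma all4: "(\<forall>a::nat<4. P a) \<longleftrightarrow> P 0 \<and> P 1 \<and> P 2 \<and> P 3"
  by (auto dest!: four_cases)

lemma qum_lt: "a < 4 \<Longrightarrow> b < 4 \<Longrightarrow> snd (q_unit_mult a b) < 4"
  by (auto dest!: four_cases simp: q_unit_mult_def)

lemma qum_assoc_all:
  "\<forall>a::nat<4. \<forall>b::nat<4. \<forall>c::nat<4. snd (q_unit_mult (snd (q_unit_mult a b)) c) = snd (q_unit_mult a (snd (q_unit_mult b c)))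
   \<and> (fst (q_unit_mult a b) \<noteq> fst (q_unit_mult (snd (q_unit_mult a b)) c))
      = (fst (q_unit_mult b c) \<noteq> fst (q_unit_mult a (snd (q_unit_mult b c))))"
  unfolding all4 by (simp add: q_unit_mult_def)

lemma qum_assoc:
  assumes "a < 4" "b < 4" "c < 4"
  shows "snd (q_unit_mult (snd (q_unit_mult a b)) c) = snd (q_unit_mult a (snd (q_unit_mult b c)))
   \<and> (fst (q_unit_mult a b) \<noteq> fst (q_unit_mult (snd (q_unit_mult a b)) c))
      = (fst (q_unit_mult b c) \<noteq> fst (q_unit_mult a (snd (q_unit_mult b c))))"
  using qum_assoc_all assms by blast

lemma group_Q8: "group Q8"
proof (rule groupI)
  fix x y assume "x \<in> carrier Q8" "y \<in> carrier Q8"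
  then show "x \<otimes>\<^bsub>Q8\<^esub> y \<in> carrier Q8"
    by (cases x, cases y) (auto simp: Q8_mult Q8_carrier qum_lt)
next
  show "\<one>\<^bsub>Q8\<^esub> \<in> carrier Q8" by (simp add: Q8_one Q8_carrier)
next
  fix x y z assume "x \<in> carrier Q8" "y \<in> carrier Q8" "z \<in> carrier Q8"
  then obtain s a t b r c where xyz: "x = (s,a)" "y = (t,b)" "z = (r,c)" "a < 4" "b < 4" "c < 4"
    by (auto simp: Q8_carrier)
  show "x \<otimes>\<^bsub>Q8\<^esub> y \<otimes>\<^bsub>Q8\<^esub> z = x \<otimes>\<^bsub>Q8\<^esub> (y \<otimes>\<^bsub>Q8\<^esub> z)"
    using qum_assoc[OF xyz(4-6)] unfolding xyz by (simp add: Q8_mult) blast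
next
  fix x assume "x \<in> carrier Q8"
  then show "\<one>\<^bsub>Q8\<^esub> \<otimes>\<^bsub>Q8\<^esub> x = x"
    by (cases x) (simp add: Q8_one Q8_mult q_unit_mult_def)
next
  fix x assume "x \<in> carrier Q8"
  then obtain s a where x: "x = (s, a)" "a < 4" by (auto simp: Q8_carrier)
  show "\<exists>y\<in>carrier Q8. y \<otimes>\<^bsub>Q8\<^esub> x = \<one>\<^bsub>Q8\<^esub>"
  proof (cases "a = 0")
    case True
    then show ?thesis using x
      by (intro bexI[of _ "(s, 0)"]) (auto simp: Q8_mult Q8_one Q8_carrier q_unit_mult_def)
  next
    case False
    then show ?thesis using x
      by (intro bexI[of _ "(\<not> s, a)"]) (auto simp: Q8_mult Q8_one Q8_carrier q_unit_mult_def)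
  qed
qed

lemma pow_DirProd: "(a, b) [^]\<^bsub>G \<times>\<times> H\<^esub> (m::nat) = (a [^]\<^bsub>G\<^esub> m, b [^]\<^bsub>H\<^esub> m)"
  by (induction m) auto

lemma Q8_pow:
  assumes "w \<noteq> 0" "w < 4"
  shows "(False, w) [^]\<^bsub>Q8\<^esub> (m::nat) = (2 \<le> m mod 4, if odd m then w else 0)"
proof (induction m)
  case 0
  then show ?case by (simp add: Q8_one)
next
  case (Suc m)
  have "(False, w) [^]\<^bsub>Q8\<^esub> Suc m = (2 \<le> m mod 4, if odd m then w else 0) \<otimes>\<^bsub>Q8\<^esub> (False, w)"
    using Suc by simp
  also have "\<dots> = (2 \<le> Suc m mod 4, if odd (Suc m) then w else 0)"
    using assms by (auto simp: Q8_mult q_unit_mult_def mod_Suc) presburger+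
  finally show ?case .
qed

abbreviation HH :: "nat \<Rightarrow> ((bool \<times> nat) \<times> int) monoid" where
  "HH n \<equiv> Q8 \<times>\<times> integer_mod_group n"

definition cls :: "(bool \<times> nat) \<times> int \<Rightarrow> nat" where "cls x = snd (fst x)"

lemma HH_carrier: "n > 0 \<Longrightarrow> carrier (HH n) = (UNIV \<times> {0..<4}) \<times> {0..<int n}"
  by (simp add: Q8_carrier carrier_integer_mod_group)

lemmas HHc = Q8_carrier carrier_integer_mod_group

lemma group_HH: "group (HH n)"
  by (simp add: DirProd_group group_Q8)

lemma finite_HH: "n > 0 \<Longrightarrow> finite (carrier (HH n))"
  by (simp add: HHc)

lemma card_HH: "n > 0 \<Longrightarrow> card (carrier (HH n)) = 8 * n"
  by (simp add: HHc card_cartesian_product)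

lemma card_cls:
  assumes "n > 0" "i < 4"
  shows "card {x \<in> carrier (HH n). cls x = i} = 2 * n"
proof -
  have "{x \<in> carrier (HH n). cls x = i} = (UNIV \<times> {i}) \<times> {0..<int n}"
    using assms by (auto simp: HHc cls_def)
  then show ?thesis by (simp add: card_cartesian_product)
qed

lemma arith_m:
  fixes n a k :: nat
  assumes "odd n"
  shows "(a*n*n + k*(n+1)^2) mod 4 = a mod 4" "(a*n*n + k*(n+1)^2) mod n = k mod n"
proof -
  obtain t where t: "n = 2*t+1" using assms oddE by blast
  have e1: "a*n*n + k*(n+1)^2 = a + 4*(a*(t*t+t) + k*(t+1)*(t+1))"
    unfolding t by (simp add: power2_eq_square algebra_simps)
  show "(a*n*n + k*(n+1)^2) mod 4 = a mod 4" unfolding e1 by (simp only: mod_mult_self2)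
  have e2: "a*n*n + k*(n+1)^2 = k + n*(a*n + k*(n+2))"
    by (simp add: power2_eq_square algebra_simps)
  show "(a*n*n + k*(n+1)^2) mod n = k mod n" unfolding e2 by (simp only: mod_mult_self2)
qed

lemma HH_gen:
  assumes n: "n > 0" "odd n" and w: "w \<noteq> 0" "w < 4"
    and x: "x \<in> carrier (HH n)" "cls x = 0 \<or> cls x = w"
  shows "x \<in> generate (HH n) {((False, w), 1 mod int n)}"
proof -
  obtain s u k where xe: "x = ((s, u), k)" "0 \<le> k" "k < int n" "u = 0 \<or> u = w"
    using x n by (cases x) (auto simp: HHc cls_def)
  define a :: nat where "a = (if u = 0 then (if s then 2 else 0) else (if s then 3 else 1))"
  define m where "m = a*n*n + nat k*(n+1)^2"
  have m4: "m mod 4 = a" unfolding m_def using arith_m(1)[OF n(2)] a_def by simp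
  have mn: "m mod n = nat k" unfolding m_def using arith_m(2)[OF n(2)] xe by simp
  have oddm: "odd m \<longleftrightarrow> odd a" using m4 by presburger
  have "((False, w), 1 mod int n) [^]\<^bsub>HH n\<^esub> m = x"
  proof -
    have "(int m * (1 mod int n)) mod int n = k"
    proof (cases "n = 1")
      case True then show ?thesis using xe by simp
    next
      case False
      then have "1 mod int n = 1" using n by simp
      then show ?thesis using mn xe by (simp flip: of_nat_mod)
    qed
    then show ?thesis
      using Q8_pow[OF w, of m] m4 oddm xe unfolding a_def pow_DirProd
      by (auto split: if_splits)
  qed
  moreover have "((False, w), 1 mod int n) \<in> carrier (HH n)"
    using w n by (simp add: HHc)
  ultimately show ?thesis using group.pow_in_gen[OF group_HH] by metis
qed

lemma HH_comm:
  assumes "x \<in> carrier (HH n)" "y \<in> carrier (HH n)" "n > 0"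
    and "x \<otimes>\<^bsub>HH n\<^esub> y = y \<otimes>\<^bsub>HH n\<^esub> x"
  shows "cls x = 0 \<or> cls y = 0 \<or> cls x = cls y"
proof -
  obtain s u k t v l where e: "x = ((s,u),k)" "y = ((t,v),l)" "u < 4" "v < 4"
    using assms by (cases x, cases y) (auto simp: HHc)
  have "(s,u) \<otimes>\<^bsub>Q8\<^esub> (t,v) = (t,v) \<otimes>\<^bsub>Q8\<^esub> (s,u)"
    using assms(4) unfolding e by simp
  then show ?thesis using e(3,4) unfolding e cls_def
    by (auto dest!: four_cases simp: Q8_mult q_unit_mult_def)
qed

lemma HH_adj:
  assumes n: "n > 0" "odd n" and x: "x \<in> carrier (HH n)" and y: "y \<in> carrier (HH n)"
  shows "pe_adj (HH n) x y \<longleftrightarrow> x \<noteq> y \<and> (cls x = 0 \<or> cls y = 0 \<or> cls x = cls y)"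
proof
  assume "pe_adj (HH n) x y"
  then show "x \<noteq> y \<and> (cls x = 0 \<or> cls y = 0 \<or> cls x = cls y)"
    using group.adj_comm[OF group_HH _ x y finite_HH[OF n(1)]] HH_comm[OF x y n(1)]
    by (auto simp: pe_adj_def)
next
  assume a: "x \<noteq> y \<and> (cls x = 0 \<or> cls y = 0 \<or> cls x = cls y)"
  define w where "w = (if cls x \<noteq> 0 then cls x else if cls y \<noteq> 0 then cls y else 1)"
  have cl4: "cls x < 4" "cls y < 4" using x y n by (auto simp: HHc cls_def)
  have w: "w \<noteq> 0" "w < 4" using cl4 unfolding w_def by auto
  have "cls x = 0 \<or> cls x = w" "cls y = 0 \<or> cls y = w" using a unfolding w_def by auto
  then have "x \<in> generate (HH n) {((False, w), 1 mod int n)}" "y \<in> generate (HH n) {((False, w), 1 mod int n)}"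
    using HH_gen[OF n w] x y by auto
  moreover have "((False, w), 1 mod int n) \<in> carrier (HH n)"
    using w n by (simp add: HHc)
  ultimately show "pe_adj (HH n) x y"
    using group.adj_iff[OF group_HH finite_HH[OF n(1)] x y] a by blast
qed

locale qg = group G for G (structure) +
  fixes cl :: "'a \<Rightarrow> nat" and n :: nat
  assumes fin: "finite (carrier G)"
    and npos: "n > 0" and nodd: "odd n"
    and cl4: "x \<in> carrier G \<Longrightarrow> cl x < 4"
    and adj: "x \<in> carrier G \<Longrightarrow> y \<in> carrier G \<Longrightarrow> x \<noteq> y \<Longrightarrow>
       (\<exists>g\<in>carrier G. x \<in> generate G {g} \<and> y \<in> generate G {g}) \<longleftrightarrow> cl x = 0 \<or> cl y = 0 \<or> cl x = cl y"
    and cardS: "i < 4 \<Longrightarrow> card {x \<in> carrier G. cl x = i} = 2 * n"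
    and cardG: "card (carrier G) = 8 * n"
begin

lemma lcan: "x \<in> carrier G \<Longrightarrow> y \<in> carrier G \<Longrightarrow> z \<in> carrier G \<Longrightarrow> x \<otimes> y = x \<otimes> z \<longleftrightarrow> y = z"
  using Units_l_cancel Units_eq by simp

lemma rcan: "x \<in> carrier G \<Longrightarrow> y \<in> carrier G \<Longrightarrow> z \<in> carrier G \<Longrightarrow> y \<otimes> x = z \<otimes> x \<longleftrightarrow> y = z"
  using right_cancel by simp

lemma S_ne: "i < 4 \<Longrightarrow> \<exists>x\<in>carrier G. cl x = i"
proof (rule ccontr)
  assume "i < 4" "\<not> (\<exists>x\<in>carrier G. cl x = i)"
  then have "{x \<in> carrier G. cl x = i} = {}" by auto
  then have "card {x \<in> carrier G. cl x = i} = 0" by (metis card.empty)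
  then show False using cardS[OF \<open>i < 4\<close>] npos by simp
qed

lemma gen_fin: "g \<in> carrier G \<Longrightarrow> finite (generate G {g})"
  using fin gen_carrier finite_subset by blast

lemma step1:
  assumes i: "0 < i" "i < 4"
  shows "\<exists>a\<in>carrier G. cl a = i \<and> generate G {a} = {x \<in> carrier G. cl x = 0 \<or> cl x = i}"
proof -
  let ?S = "{x \<in> carrier G. cl x = i}"
  have fS: "finite ?S" using fin by simp
  have neS: "?S \<noteq> {}" using S_ne[OF i(2)] by auto
  obtain a where a: "a \<in> ?S" "ord a = Max (ord ` ?S)"
    using Max_in[of "ord ` ?S"] fS neS by (metis (no_types, lifting) finite_imageI image_iff image_is_empty)
  have amax: "\<And>b. b \<in> ?S \<Longrightarrow> ord b \<le> ord a" using a(2) fS by simp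
  have aG: "a \<in> carrier G" and cla: "cl a = i" using a(1) by auto
  define j where "j = (if i = 1 then 2 else 1::nat)"
  have j: "j \<noteq> i" "j \<noteq> 0" "j < 4" unfolding j_def by auto
  obtain wj where wj: "wj \<in> carrier G" "cl wj = j" using S_ne[OF j(3)] by blast
  have sub: "y \<in> generate G {a}" if y: "y \<in> carrier G" "cl y = 0 \<or> cl y = i" for y
  proof (cases "y = a")
    case True then show ?thesis using gen_self aG by simp
  next
    case False
    then have "\<exists>g\<in>carrier G. a \<in> generate G {g} \<and> y \<in> generate G {g}"
      using adj[OF aG y(1)] cla y(2) by auto
    then obtain g where g: "g \<in> carrier G" "a \<in> generate G {g}" "y \<in> generate G {g}" by blast
    show ?thesis
    proof (cases "g = a")
      case True then show ?thesis using g by simp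
    next
      case False
      have "\<exists>h\<in>carrier G. g \<in> generate G {h} \<and> a \<in> generate G {h}"
        using g gen_self by blast
      then have clg: "cl g = 0 \<or> cl g = i" using adj[OF g(1) aG False] cla i by auto
      show ?thesis
      proof (cases "cl g = 0")
        case True
        have "g \<noteq> wj" using True wj j by auto
        then have "\<exists>h\<in>carrier G. g \<in> generate G {h} \<and> wj \<in> generate G {h}"
          using adj[OF g(1) wj(1)] True by auto
        then obtain h where h: "h \<in> carrier G" "g \<in> generate G {h}" "wj \<in> generate G {h}" by blast
        have "a \<in> generate G {h}" using gen_mono[OF h(1) h(2)] g(2) by blast
        then have "\<exists>h\<in>carrier G. a \<in> generate G {h} \<and> wj \<in> generate G {h}" using h by blast
        moreover have "a \<noteq> wj" using cla wj j by auto
        ultimately have "cl a = 0 \<or> cl wj = 0 \<or> cl a = cl wj" using adj[OF aG wj(1)] by blast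
        then show ?thesis using cla wj j i by auto
      next
        case False
        then have "cl g = i" using clg by simp
        then have "ord g \<le> ord a" using amax g(1) by simp
        moreover have sub: "generate G {a} \<subseteq> generate G {g}" using gen_mono[OF g(1) g(2)] .
        moreover have "ord a = card (generate G {a})" "ord g = card (generate G {g})"
          using generate_pow_card aG g(1) by auto
        ultimately have "card (generate G {a}) = card (generate G {g})"
          using card_mono[OF gen_fin[OF g(1)] sub] by linarith
        then have "generate G {a} = generate G {g}"
          using card_subset_eq[OF gen_fin[OF g(1)] sub] by blast
        then show ?thesis using g(3) by simp
      qed
    qed
  qed
  have sup: "x \<in> carrier G \<and> (cl x = 0 \<or> cl x = i)" if x: "x \<in> generate G {a}" for x
  proof -
    have xG: "x \<in> carrier G" using x gen_carrier[OF aG] by blast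
    show ?thesis
    proof (cases "x = a")
      case True then show ?thesis using aG cla by simp
    next
      case False
      have "\<exists>h\<in>carrier G. a \<in> generate G {h} \<and> x \<in> generate G {h}"
        using aG gen_self x by blast
      moreover have "a \<noteq> x" using False by simp
      ultimately have "cl a = 0 \<or> cl x = 0 \<or> cl a = cl x" using adj[OF aG xG] by blast
      then show ?thesis using cla xG i by auto
    qed
  qed
  have "generate G {a} = {x \<in> carrier G. cl x = 0 \<or> cl x = i}"
    using sub sup by blast
  then show ?thesis using aG cla by blast
qed

end

locale qg2 = qg +
  fixes a :: "nat \<Rightarrow> 'a"
  assumes a_car: "0 < i \<Longrightarrow> i < 4 \<Longrightarrow> a i \<in> carrier G"
    and a_cl: "0 < i \<Longrightarrow> i < 4 \<Longrightarrow> cl (a i) = i"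
    and a_gen: "0 < i \<Longrightarrow> i < 4 \<Longrightarrow> generate G {a i} = {x \<in> carrier G. cl x = 0 \<or> cl x = i}"
begin

definition D where "D = {x \<in> carrier G. cl x = 0}"

lemma inM: "0 < i \<Longrightarrow> i < 4 \<Longrightarrow> x \<in> generate G {a i} \<longleftrightarrow> x \<in> carrier G \<and> (cl x = 0 \<or> cl x = i)"
  by (simp add: a_gen)

lemma D_M: "0 < i \<Longrightarrow> i < 4 \<Longrightarrow> D \<subseteq> generate G {a i}"
  using inM unfolding D_def by blast

lemma M_sub: "0 < i \<Longrightarrow> i < 4 \<Longrightarrow> subgroup (generate G {a i}) G"
  using gen_sub a_car by blast

lemma D_eq: "D = generate G {a 1} \<inter> generate G {a 2}"
  using inM[of 1] inM[of 2] unfolding D_def by auto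

lemma D_sub: "subgroup D G"
  unfolding D_eq by (rule subgroups_Inter_pair[OF M_sub[of 1] M_sub[of 2]]) simp_all

lemma D_car: "x \<in> D \<Longrightarrow> x \<in> carrier G" unfolding D_def by simp

lemma D_mult: "x \<in> D \<Longrightarrow> y \<in> D \<Longrightarrow> x \<otimes> y \<in> D"
  by (rule subgroup.m_closed[OF D_sub])

lemma D_inv: "x \<in> D \<Longrightarrow> inv x \<in> D"
  by (rule subgroup.m_inv_closed[OF D_sub])

lemma D_one: "\<one> \<in> D"
  by (rule subgroup.one_closed[OF D_sub])

lemma D_central: assumes "d \<in> D" "g \<in> carrier G" shows "d \<otimes> g = g \<otimes> d"
proof (cases "d = g")
  case False
  have dG: "d \<in> carrier G" "cl d = 0" using assms D_def by auto
  then obtain h where h: "h \<in> carrier G" "d \<in> generate G {h}" "g \<in> generate G {h}"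
    using adj[OF dG(1) assms(2) False] by blast
  then show ?thesis using gen_comm[OF fin h] by blast
qed simp

lemma card_D: "card D = 2 * n" unfolding D_def using cardS by simp

lemma ord_a: assumes i: "0 < i" "i < 4" shows "ord (a i) = 4 * n"
proof -
  have "generate G {a i} = D \<union> {x \<in> carrier G. cl x = i}" using a_gen[OF i] D_def by auto
  moreover have "D \<inter> {x \<in> carrier G. cl x = i} = {}" using i D_def by auto
  ultimately have "card (generate G {a i}) = card D + card {x \<in> carrier G. cl x = i}"
    using fin by (simp add: D_def card_Un_disjoint)
  then show ?thesis using generate_pow_card[OF a_car[OF i]] card_D cardS[OF i(2)] by simp
qed

lemma a_notD: "0 < i \<Longrightarrow> i < 4 \<Longrightarrow> a i \<notin> D"
  using a_cl D_def by auto

lemma sq_D: assumes i: "0 < i" "i < 4" shows "a i \<otimes> a i \<in> D"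
proof (rule ccontr)
  assume nD: "a i \<otimes> a i \<notin> D"
  let ?M = "generate G {a i}" and ?a = "a i"
  have aG: "?a \<in> carrier G" using a_car[OF i] .
  have aM: "?a \<in> ?M" using gen_self aG by simp
  let ?T = "(\<lambda>d. ?a \<otimes> d) ` D"
  have TM: "?T \<subseteq> ?M" using aM D_M[OF i] subgroup.m_closed[OF M_sub[OF i]] by blast
  have TD: "?T \<inter> D = {}"
  proof (rule ccontr)
    assume "?T \<inter> D \<noteq> {}"
    then obtain d where d: "d \<in> D" "?a \<otimes> d \<in> D" by auto
    have "?a = (?a \<otimes> d) \<otimes> inv d" using d aG D_car by (simp add: m_assoc)
    then have "?a \<in> D" using d D_mult D_inv by metis
    then show False using a_notD[OF i] by simp
  qed
  have "inj_on (\<lambda>d. ?a \<otimes> d) D" using aG D_car lcan by (auto simp: inj_on_def)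
  then have cT: "card ?T = 2 * n" using card_image card_D by metis
  have "card (?T \<union> D) = 4 * n"
    using cT card_D TD fin D_car by (subst card_Un_disjoint) (auto intro: finite_subset)
  moreover have "card ?M = 4 * n" using generate_pow_card[OF aG] ord_a[OF i] by simp
  moreover have "?T \<union> D \<subseteq> ?M" using TM D_M[OF i] by blast
  ultimately have eq: "?T \<union> D = ?M" using card_subset_eq[OF gen_fin[OF aG]] by metis
  have "?a \<otimes> ?a \<in> ?M" using subgroup.m_closed[OF M_sub[OF i] aM aM] .
  then have "?a \<otimes> ?a \<in> ?T" using eq nD by blast
  then obtain d where d: "d \<in> D" "?a \<otimes> ?a = ?a \<otimes> d" by auto
  then have "?a = d" using lcan aG D_car by blast
  then show False using d(1) a_notD[OF i] by simp
qed

lemma pow_even_D: assumes i: "0 < i" "i < 4" shows "a i [^] (2 * (m::nat)) \<in> D"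
proof -
  have "a i \<otimes> a i = a i [^] (2::nat)" using a_car[OF i] by (simp add: numeral_2_eq_2)
  then have "a i [^] (2 * m) = (a i \<otimes> a i) [^] m"
    using a_car[OF i] by (simp add: nat_pow_pow)
  then show ?thesis using sub_nat_pow[OF D_sub sq_D[OF i]] by simp
qed

lemma pow_odd_notD: assumes i: "0 < i" "i < 4" shows "a i [^] (2 * (m::nat) + 1) \<notin> D"
proof
  assume h: "a i [^] (2 * m + 1) \<in> D"
  have aG: "a i \<in> carrier G" using a_car[OF i] .
  have "a i [^] (2 * m + 1) = a i [^] (2 * m) \<otimes> a i" by simp
  then have "a i = inv (a i [^] (2 * m)) \<otimes> a i [^] (2 * m + 1)"
    using aG by (simp add: inv_solve_left)
  then have "a i \<in> D" using D_mult D_inv pow_even_D[OF i] h by metis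
  then show False using a_notD[OF i] by simp
qed

lemma M_pow: "0 < i \<Longrightarrow> i < 4 \<Longrightarrow> a i [^] (k::nat) \<in> generate G {a i}"
  using pow_in_gen a_car by blast

lemma inv2: assumes i: "0 < i" "i < 4" and y: "y \<in> generate G {a i}" "y \<otimes> y = \<one>"
  shows "y = \<one> \<or> y = a i [^] (2 * n)"
proof -
  have aG: "a i \<in> carrier G" using a_car[OF i] .
  obtain k :: nat where k: "y = a i [^] k" using gen_pow_nat[OF fin aG y(1)] by blast
  have "a i [^] (k + k) = \<one>" using y(2) k aG by (simp add: nat_pow_mult)
  then have "4 * n dvd k + k" using pow_eq_id[OF aG] ord_a[OF i] by simp
  then obtain q where "k + k = 4 * n * q" by (auto elim: dvdE)
  then have "k = 2 * n * q" by simp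
  then have "2 * n dvd k" by simp
  then obtain j where j: "k = 2 * n * j" by blast
  have z2: "a i [^] (2 * n) \<otimes> a i [^] (2 * n) = \<one>"
    using aG ord_a[OF i] by (simp add: nat_pow_mult pow_eq_id)
  have zG: "a i [^] (2 * n) \<in> carrier G" using aG by simp
  have "\<And>j::nat. (a i [^] (2 * n)) [^] j = (if even j then \<one> else a i [^] (2 * n))"
  proof -
    fix j :: nat show "(a i [^] (2 * n)) [^] j = (if even j then \<one> else a i [^] (2 * n))"
      by (induction j) (use z2 zG in auto)
  qed
  moreover have "y = (a i [^] (2 * n)) [^] j" using k j aG by (simp add: nat_pow_pow)
  ultimately show ?thesis by (auto split: if_splits)
qed

end

context group begin
lemma cancel1: "x \<in> carrier G \<Longrightarrow> y \<in> carrier G \<Longrightarrow> inv x \<otimes> (x \<otimes> y) = y"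
  by (simp add: m_assoc[symmetric])
lemma cancel2: "x \<in> carrier G \<Longrightarrow> y \<in> carrier G \<Longrightarrow> x \<otimes> (inv x \<otimes> y) = y"
  by (simp add: m_assoc[symmetric])
end

context qg2 begin

definition "x1 = a 1 [^] n"
definition "x2 = a 2 [^] n"
definition "z = a 1 [^] (2 * n)"
definition "c = a 1 [^] (4::nat)"
definition "w = x1 \<otimes> x2"

lemma a1: "a 1 \<in> carrier G" and a2: "a 2 \<in> carrier G" and a3: "a 3 \<in> carrier G"
  using a_car by auto

lemma car[simp]: "x1 \<in> carrier G" "x2 \<in> carrier G" "z \<in> carrier G" "c \<in> carrier G" "w \<in> carrier G"
  using a1 a2 by (auto simp: x1_def x2_def z_def c_def w_def)

lemma n_odd_form: obtains t where "n = 2 * t + 1"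
  using nodd oddE by blast

lemma x1_notD: "x1 \<notin> D"
  using pow_odd_notD[of 1] n_odd_form unfolding x1_def by (metis zero_less_one numeral_less_iff semiring_norm(76) one_less_numeral_iff)

lemma x2_notD: "x2 \<notin> D"
proof -
  obtain t where "n = 2 * t + 1" using n_odd_form by blast
  then show ?thesis using pow_odd_notD[of 2 t] unfolding x2_def by simp
qed

lemma x1_M: "x1 \<in> generate G {a 1}" unfolding x1_def using M_pow[of 1] by simp
lemma x2_M: "x2 \<in> generate G {a 2}" unfolding x2_def using M_pow[of 2] by simp

lemma cl_x1: "cl x1 = 1" using x1_M x1_notD inM[of 1 x1] unfolding D_def by auto
lemma cl_x2: "cl x2 = 2" using x2_M x2_notD inM[of 2 x2] unfolding D_def by auto

lemma z_D: "z \<in> D" unfolding z_def using pow_even_D[of 1 n] by simp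

lemma z_ne: "z \<noteq> \<one>"
proof
  assume "z = \<one>"
  then have "4 * n dvd 2 * n" using pow_eq_id[OF a1] ord_a[of 1] unfolding z_def by simp
  then show False using npos by (auto dest: dvd_imp_le)
qed

lemma zz: "z \<otimes> z = \<one>"
  unfolding z_def using a1 ord_a[of 1] by (simp add: nat_pow_mult pow_eq_id)

lemma x1x1: "x1 \<otimes> x1 = z"
  unfolding x1_def z_def using a1 by (simp add: nat_pow_mult mult_2)

lemma z2: "a 2 [^] (2 * n) = z"
proof -
  let ?y = "a 2 [^] (2 * n)"
  have yD: "?y \<in> D" using pow_even_D[of 2 n] by simp
  have "?y \<otimes> ?y = \<one>" using a2 ord_a[of 2] by (simp add: nat_pow_mult pow_eq_id)
  moreover have "?y \<noteq> \<one>"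
  proof
    assume "?y = \<one>"
    then have "4 * n dvd 2 * n" using pow_eq_id[OF a2] ord_a[of 2] by simp
    then show False using npos by (auto dest: dvd_imp_le)
  qed
  moreover have "?y \<in> generate G {a 1}" using yD D_M[of 1] by auto
  ultimately show ?thesis using inv2[of 1 ?y] unfolding z_def by auto
qed

lemma x2x2: "x2 \<otimes> x2 = z"
  unfolding x2_def using a2 z2 by (simp add: nat_pow_mult mult_2)

lemma c_D: "c \<in> D" unfolding c_def using pow_even_D[of 1 2] by simp

lemma c_pow: "c [^] (k::nat) = \<one> \<longleftrightarrow> n dvd k"
  unfolding c_def using a1 ord_a[of 1] by (simp add: nat_pow_pow pow_eq_id)

lemma z_cent: "g \<in> carrier G \<Longrightarrow> z \<otimes> g = g \<otimes> z" using D_central z_D by blast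
lemma c_cent: "g \<in> carrier G \<Longrightarrow> c \<otimes> g = g \<otimes> c" using D_central c_D by blast

lemma M_mult: "0 < i \<Longrightarrow> i < 4 \<Longrightarrow> x \<in> generate G {a i} \<Longrightarrow> y \<in> generate G {a i} \<Longrightarrow> x \<otimes> y \<in> generate G {a i}"
  using M_sub subgroup.m_closed by metis
lemma M_inv: "0 < i \<Longrightarrow> i < 4 \<Longrightarrow> x \<in> generate G {a i} \<Longrightarrow> inv x \<in> generate G {a i}"
  using M_sub subgroup.m_inv_closed by metis

lemma w_not1: "w \<notin> generate G {a 1}"
proof
  assume h: "w \<in> generate G {a 1}"
  have "x2 = inv x1 \<otimes> w" unfolding w_def by (simp add: cancel1)
  then have "x2 \<in> generate G {a 1}" using M_mult[of 1] M_inv[of 1] h x1_M by simp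
  then show False using inM[of 1 x2] cl_x2 by simp
qed

lemma w_not2: "w \<notin> generate G {a 2}"
proof
  assume h: "w \<in> generate G {a 2}"
  have "x1 = w \<otimes> inv x2" unfolding w_def by (simp add: m_assoc)
  then have "x1 \<in> generate G {a 2}" using M_mult[of 2] M_inv[of 2] h x2_M by simp
  then show False using inM[of 2 x1] cl_x1 by simp
qed

lemma cl_w: "cl w = 3"
proof -
  have "cl w < 4" using cl4 by simp
  moreover have "cl w \<noteq> 0" "cl w \<noteq> 1" "cl w \<noteq> 2" using w_not1 w_not2 inM[of 1 w] inM[of 2 w] by auto
  ultimately show ?thesis by linarith
qed

lemma w_M: "w \<in> generate G {a 3}" using inM[of 3 w] cl_w by simp
lemma w_notD: "w \<notin> D" using cl_w D_def by simp

lemma rel: "x1 \<otimes> x2 = z \<otimes> (x2 \<otimes> x1)"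
proof -
  define u where "u = x1 \<otimes> x2 \<otimes> inv x1"
  have uG: "u \<in> carrier G" unfolding u_def by simp
  have ux: "u \<otimes> x1 = x1 \<otimes> x2" unfolding u_def by (simp add: m_assoc)
  have uD: "u \<notin> D"
  proof
    assume "u \<in> D"
    then have "u \<otimes> x1 = x1 \<otimes> u" by (intro D_central) simp_all
    then have "u = x2" using ux lcan uG by simp
    then show False using \<open>u \<in> D\<close> x2_notD by simp
  qed
  have u1: "u \<notin> generate G {a 1}"
  proof
    assume h: "u \<in> generate G {a 1}"
    have "x2 = inv x1 \<otimes> (u \<otimes> x1)" using ux by (simp add: cancel1)
    then have "x2 \<in> generate G {a 1}" using M_mult[of 1] M_inv[of 1] h x1_M by simp
    then show False using inM[of 1 x2] cl_x2 by simp
  qed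
  have u3: "u \<notin> generate G {a 3}"
  proof
    assume h: "u \<in> generate G {a 3}"
    have "x1 = inv u \<otimes> w" using ux uG unfolding w_def by (simp add: inv_solve_left)
    then have "x1 \<in> generate G {a 3}" using M_mult[of 3] M_inv[of 3] h w_M by simp
    then show False using inM[of 3 x1] cl_x1 by simp
  qed
  have "cl u < 4" using cl4 uG by simp
  moreover have "cl u \<noteq> 0" "cl u \<noteq> 1" "cl u \<noteq> 3" using uD u1 u3 inM[of 1 u] inM[of 3 u] uG D_def by auto
  ultimately have "cl u = 2" by linarith
  then have u2: "u \<in> generate G {a 2}" using inM[of 2 u] uG by simp
  have uu: "u \<otimes> u = z"
  proof -
    have "u \<otimes> u = x1 \<otimes> (x2 \<otimes> x2) \<otimes> inv x1" unfolding u_def by (simp add: m_assoc cancel1)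
    also have "\<dots> = z \<otimes> x1 \<otimes> inv x1" using x2x2 z_cent[of x1] by simp
    also have "\<dots> = z" by (simp add: m_assoc)
    finally show ?thesis .
  qed
  define v where "v = u \<otimes> inv x2"
  have vG: "v \<in> carrier G" unfolding v_def using uG by simp
  have v2: "v \<in> generate G {a 2}" unfolding v_def using M_mult[of 2] M_inv[of 2] u2 x2_M by simp
  have cm: "inv x2 \<otimes> u = u \<otimes> inv x2" using gen_comm[OF fin a2] u2 M_inv[of 2] x2_M by simp
  have vv: "v \<otimes> v = \<one>"
  proof -
    have "v \<otimes> v = u \<otimes> (inv x2 \<otimes> u) \<otimes> inv x2" unfolding v_def using uG by (simp add: m_assoc)
    also have "\<dots> = (u \<otimes> u) \<otimes> (inv x2 \<otimes> inv x2)" using cm uG by (simp add: m_assoc)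
    also have "\<dots> = z \<otimes> inv (x2 \<otimes> x2)" using uu by (simp add: inv_mult_group)
    also have "\<dots> = \<one>" using x2x2 by simp
    finally show ?thesis .
  qed
  have "v = \<one> \<or> v = z" using inv2[of 2 v] v2 vv z2 by simp
  then show ?thesis
  proof
    assume "v = \<one>"
    then have "u = x2" unfolding v_def using uG by (simp add: inv_solve_right')
    then have com: "x1 \<otimes> x2 = x2 \<otimes> x1" using ux by simp
    have "w \<otimes> w = x1 \<otimes> (x2 \<otimes> x1) \<otimes> x2" unfolding w_def by (simp add: m_assoc)
    also have "\<dots> = (x1 \<otimes> x1) \<otimes> (x2 \<otimes> x2)" unfolding com[symmetric] by (simp add: m_assoc)
    also have "\<dots> = \<one>" using x1x1 x2x2 zz by simp
    finally have "w \<otimes> w = \<one>" .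
    then have "w = \<one> \<or> w = a 3 [^] (2 * n)" using inv2[of 3 w] w_M by simp
    then have "w \<in> D" using D_one pow_even_D[of 3 n] by auto
    then show ?thesis using w_notD by simp
  next
    assume "v = z"
    then have "u = z \<otimes> x2" unfolding v_def using uG by (simp add: inv_solve_right')
    then show ?thesis using ux by (simp add: m_assoc)
  qed
qed

end

context qg2 begin

lemma zzx: "g \<in> carrier G \<Longrightarrow> z \<otimes> (z \<otimes> g) = g"
  using zz by (simp add: m_assoc[symmetric])

lemma t_x2x1: "x2 \<otimes> x1 = z \<otimes> w"
  unfolding w_def rel by (simp add: zzx)

lemma t_x1w: "x1 \<otimes> w = z \<otimes> x2"
  unfolding w_def by (simp add: m_assoc[symmetric] x1x1)

lemma t_x2w: "x2 \<otimes> w = x1"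
proof -
  have "x2 \<otimes> w = (x2 \<otimes> x1) \<otimes> x2" unfolding w_def by (simp add: m_assoc)
  also have "\<dots> = z \<otimes> (x1 \<otimes> (x2 \<otimes> x2))" unfolding t_x2x1 w_def by (simp add: m_assoc)
  also have "\<dots> = z \<otimes> (z \<otimes> x1)" using x2x2 z_cent[of x1] by simp
  also have "\<dots> = x1" by (simp add: zzx)
  finally show ?thesis .
qed

lemma t_wx1: "w \<otimes> x1 = x2"
proof -
  have "w \<otimes> x1 = x1 \<otimes> (x2 \<otimes> x1)" unfolding w_def by (simp add: m_assoc)
  also have "\<dots> = x1 \<otimes> (z \<otimes> w)" unfolding t_x2x1 ..
  also have "\<dots> = z \<otimes> (x1 \<otimes> w)" using z_cent[of x1] by (simp add: m_assoc[symmetric])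
  also have "\<dots> = x2" unfolding t_x1w by (simp add: zzx)
  finally show ?thesis .
qed

lemma t_wx2: "w \<otimes> x2 = z \<otimes> x1"
proof -
  have "w \<otimes> x2 = x1 \<otimes> (x2 \<otimes> x2)" unfolding w_def by (simp add: m_assoc)
  also have "\<dots> = z \<otimes> x1" using x2x2 z_cent[of x1] by simp
  finally show ?thesis .
qed

lemma t_ww: "w \<otimes> w = z"
proof -
  have "w \<otimes> w = (w \<otimes> x1) \<otimes> x2" unfolding w_def by (simp add: m_assoc)
  also have "\<dots> = z" unfolding t_wx1 x2x2 ..
  finally show ?thesis .
qed

definition "q u = (if u = (0::nat) then \<one> else if u = 1 then x1 else if u = 2 then x2 else w)"
definition "zs b = (if b then z else \<one>)"

lemma q_car[simp]: "q u \<in> carrier G" unfolding q_def by simp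
lemma zs_car[simp]: "zs b \<in> carrier G" unfolding zs_def by simp

lemma q_table_all: "\<forall>u::nat<4. \<forall>v::nat<4. q u \<otimes> q v = zs (fst (q_unit_mult u v)) \<otimes> q (snd (q_unit_mult u v))"
  unfolding all4 by (simp add: q_unit_mult_def q_def zs_def x1x1 x2x2 t_x2x1 t_x1w t_x2w t_wx1 t_wx2 t_ww w_def[symmetric])

lemma q_table: "u < 4 \<Longrightarrow> v < 4 \<Longrightarrow> q u \<otimes> q v = zs (fst (q_unit_mult u v)) \<otimes> q (snd (q_unit_mult u v))"
  using q_table_all by blast

lemma zs_xor: "zs (s \<noteq> t) = zs s \<otimes> zs t"
  unfolding zs_def using zz by auto

lemma zs3: "zs (s \<noteq> (t \<noteq> f)) = zs s \<otimes> (zs t \<otimes> zs f)"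
  unfolding zs_def using zz by (cases s; cases t; cases f) (auto simp: zzx)

lemma zs_D: "zs b \<in> D" unfolding zs_def using z_D D_one by simp

lemma c_mod: "c [^] (m::nat) = c [^] (m mod n)"
proof -
  have "c [^] (n * (m div n)) \<otimes> c [^] (m mod n) = c [^] m" by (simp add: nat_pow_mult)
  moreover have "c [^] (n * (m div n)) = \<one>" using c_pow by simp
  ultimately show ?thesis by simp
qed

lemma c_add:
  assumes "0 \<le> k" "0 \<le> l"
  shows "c [^] nat ((k + l) mod int n) = c [^] nat k \<otimes> c [^] nat l"
proof -
  have "(k + l) mod int n = int ((nat k + nat l) mod n)"
    using assms by (simp add: zmod_int)
  then have "nat ((k + l) mod int n) = (nat k + nat l) mod n" by simp
  then show ?thesis using c_mod[of "nat k + nat l"] by (simp add: nat_pow_mult)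
qed

lemma rearr:
  assumes "pP \<in> carrier G" "xX \<in> carrier G" "aA \<in> carrier G" "bB \<in> carrier G" "yY \<in> carrier G" "cC \<in> carrier G"
    and "aA \<in> D" "bB \<in> D"
  shows "(pP \<otimes> xX \<otimes> aA) \<otimes> (bB \<otimes> yY \<otimes> cC) = pP \<otimes> bB \<otimes> (xX \<otimes> yY) \<otimes> (aA \<otimes> cC)"
proof -
  have e1: "aA \<otimes> (bB \<otimes> (yY \<otimes> cC)) = bB \<otimes> (yY \<otimes> (aA \<otimes> cC))"
  proof -
    have "aA \<otimes> (bB \<otimes> (yY \<otimes> cC)) = (aA \<otimes> (bB \<otimes> yY)) \<otimes> cC" using assms by (simp add: m_assoc)
    also have "\<dots> = ((bB \<otimes> yY) \<otimes> aA) \<otimes> cC" using D_central[of aA "bB \<otimes> yY"] assms by simp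
    also have "\<dots> = bB \<otimes> (yY \<otimes> (aA \<otimes> cC))" using assms by (simp add: m_assoc)
    finally show ?thesis .
  qed
  have e2: "xX \<otimes> (bB \<otimes> Vv) = bB \<otimes> (xX \<otimes> Vv)" if "Vv \<in> carrier G" for Vv
  proof -
    have "xX \<otimes> (bB \<otimes> Vv) = (xX \<otimes> bB) \<otimes> Vv" using assms that by (simp add: m_assoc)
    also have "\<dots> = (bB \<otimes> xX) \<otimes> Vv" using D_central[of bB xX] assms by simp
    also have "\<dots> = bB \<otimes> (xX \<otimes> Vv)" using assms that by (simp add: m_assoc)
    finally show ?thesis .
  qed
  show ?thesis using assms by (simp add: m_assoc e1 e2)
qed

definition "phi p = zs (fst (fst p)) \<otimes> q (snd (fst p)) \<otimes> c [^] nat (snd p)"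

lemma phi_car: "phi p \<in> carrier G" unfolding phi_def by simp

lemma c_pow_D: "c [^] (k::nat) \<in> D" using sub_nat_pow[OF D_sub c_D] .

lemma phi_hom: "phi \<in> hom (HH n) G"
proof (rule homI)
  fix p assume "p \<in> carrier (HH n)" then show "phi p \<in> carrier G" by (simp add: phi_car)
next
  fix p p' assume p: "p \<in> carrier (HH n)" and p': "p' \<in> carrier (HH n)"
  obtain s u k t v l where e: "p = ((s,u),k)" "p' = ((t,v),l)" "u < 4" "v < 4" "0 \<le> k" "0 \<le> l"
    using p p' npos by (cases p, cases p') (auto simp: HHc)
  have pp: "p \<otimes>\<^bsub>HH n\<^esub> p' = ((s \<noteq> (t \<noteq> fst (q_unit_mult u v)), snd (q_unit_mult u v)), (k + l) mod int n)"
    unfolding e by (simp add: Q8_mult)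
  have "phi (p \<otimes>\<^bsub>HH n\<^esub> p') = zs s \<otimes> zs t \<otimes> (zs (fst (q_unit_mult u v)) \<otimes> q (snd (q_unit_mult u v))) \<otimes> (c [^] nat k \<otimes> c [^] nat l)"
    unfolding pp phi_def fst_conv snd_conv zs3 using e by (simp add: c_add m_assoc)
  also have "\<dots> = zs s \<otimes> zs t \<otimes> (q u \<otimes> q v) \<otimes> (c [^] nat k \<otimes> c [^] nat l)"
    using q_table[OF e(3,4)] by simp
  also have "\<dots> = (zs s \<otimes> q u \<otimes> c [^] nat k) \<otimes> (zs t \<otimes> q v \<otimes> c [^] nat l)"
    using rearr[of "zs s" "q u" "c [^] nat k" "zs t" "q v" "c [^] nat l"] c_pow_D zs_D by simp
  also have "\<dots> = phi p \<otimes> phi p'" unfolding phi_def e by simp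
  finally show "phi (p \<otimes>\<^bsub>HH n\<^esub> p') = phi p \<otimes> phi p'" .
qed

end

context qg2 begin

lemma q_notD: "u < 4 \<Longrightarrow> u \<noteq> 0 \<Longrightarrow> q u \<notin> D"
  unfolding q_def using x1_notD x2_notD w_notD by auto

lemma inv_z: "inv z = z" using inv_equality[OF zz] by simp

lemma phi_ker:
  assumes p: "p \<in> carrier (HH n)" and ph: "phi p = \<one>"
  shows "p = \<one>\<^bsub>HH n\<^esub>"
proof -
  obtain s u k where e: "p = ((s,u),k)" "u < 4" "0 \<le> k" "k < int n"
    using p npos by (cases p) (auto simp: HHc)
  define K where "K = c [^] nat k"
  have KD: "K \<in> D" unfolding K_def by (rule c_pow_D)
  have KG: "K \<in> carrier G" using KD D_car by simp
  have eq: "zs s \<otimes> q u \<otimes> K = \<one>" using ph unfolding phi_def e K_def by simp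
  then have "inv K = zs s \<otimes> q u" using inv_equality[of "zs s \<otimes> q u" K] KG by simp
  then have "zs s \<otimes> q u \<in> D" using D_inv KD by metis
  moreover have "q u = inv (zs s) \<otimes> (zs s \<otimes> q u)" by (simp add: cancel1)
  ultimately have "q u \<in> D" using D_mult D_inv zs_D by metis
  then have u0: "u = 0" using q_notD e(2) by blast
  then have eq2: "zs s \<otimes> K = \<one>" using eq by (simp add: q_def)
  have K1: "K = \<one>"
  proof (cases s)
    case True
    then have "z \<otimes> K = \<one>" using eq2 by (simp add: zs_def)
    then have "K \<otimes> z = \<one>" using inv_comm KG by simp
    then have Kz: "K = z" using inv_equality[of K z] KG inv_z by simp
    then have "c [^] (nat k + nat k) = \<one>" unfolding K_def[symmetric] using zz
      by (simp add: nat_pow_mult[symmetric] K_def)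
    then have "n dvd 2 * nat k" using c_pow by (simp add: mult_2)
    then have "n dvd nat k" using nodd coprime_dvd_mult_right_iff[of n 2 "nat k"] by simp
    then have "K = \<one>" unfolding K_def using c_pow by simp
    then show ?thesis .
  next
    case False
    then show ?thesis using eq2 KG by (simp add: zs_def)
  qed
  then have "n dvd nat k" unfolding K_def using c_pow by simp
  moreover have "nat k < n" using e(3,4) by linarith
  ultimately have "nat k = 0" by (metis dvd_imp_le leD neq0_conv)
  then have k0: "k = 0" using e(3) by simp
  have "s = False"
  proof (rule ccontr)
    assume "s \<noteq> False"
    then have "z \<otimes> K = \<one>" using eq2 by (simp add: zs_def)
    then show False using K1 z_ne by simp
  qed
  then show ?thesis using e u0 k0 by (simp add: Q8_one)
qed

lemma phi_gh: "group_hom (HH n) G phi"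
  unfolding group_hom_def group_hom_axioms_def using group_HH phi_hom is_group by simp

lemma phi_inj: "inj_on phi (carrier (HH n))"
proof -
  have "kernel (HH n) G phi = {\<one>\<^bsub>HH n\<^esub>}"
  proof
    show "kernel (HH n) G phi \<subseteq> {\<one>\<^bsub>HH n\<^esub>}" using phi_ker unfolding kernel_def by auto
    show "{\<one>\<^bsub>HH n\<^esub>} \<subseteq> kernel (HH n) G phi"
      unfolding kernel_def using group_hom.hom_one[OF phi_gh] monoid.one_closed[OF group.is_monoid[OF group_HH]] by auto
  qed
  then show ?thesis using group_hom.inj_iff_trivial_ker[OF phi_gh] by simp
qed

lemma iso_main: "G \<cong> HH n"
proof -
  have sub: "phi ` carrier (HH n) \<subseteq> carrier G" using phi_car by auto
  have "card (phi ` carrier (HH n)) = 8 * n" using card_image[OF phi_inj] card_HH[OF npos] by simp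
  then have "phi ` carrier (HH n) = carrier G" using card_subset_eq[OF fin sub] cardG by simp
  then have "bij_betw phi (carrier (HH n)) (carrier G)" using phi_inj by (simp add: bij_betw_def)
  then have "phi \<in> iso (HH n) G" using phi_hom by (simp add: iso_def)
  then have "HH n \<cong> G" unfolding is_iso_def by auto
  then show ?thesis by (rule group.iso_sym[OF group_HH])
qed

end

context qg begin

lemma qg_iso: "G \<cong> HH n"
proof -
  obtain b1 where b1: "b1 \<in> carrier G" "cl b1 = 1" "generate G {b1} = {x \<in> carrier G. cl x = 0 \<or> cl x = 1}"
    using step1[of 1] by auto
  obtain b2 where b2: "b2 \<in> carrier G" "cl b2 = 2" "generate G {b2} = {x \<in> carrier G. cl x = 0 \<or> cl x = 2}"
    using step1[of 2] by auto
  obtain b3 where b3: "b3 \<in> carrier G" "cl b3 = 3" "generate G {b3} = {x \<in> carrier G. cl x = 0 \<or> cl x = 3}"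
    using step1[of 3] by auto
  define a where "a i = (if i = 1 then b1 else if i = 2 then b2 else b3)" for i :: nat
  have a: "a i \<in> carrier G \<and> cl (a i) = i \<and> generate G {a i} = {x \<in> carrier G. cl x = 0 \<or> cl x = i}"
    if "0 < i" "i < 4" for i
  proof -
    have "i = 1 \<or> i = 2 \<or> i = 3" using that by auto
    then show ?thesis unfolding a_def using b1 b2 b3 by auto
  qed
  interpret qg2 G cl n a
    by unfold_locales (use a in auto)
  show ?thesis by (rule iso_main)
qed

end

theorem theorem5:
  fixes G :: "('a, 'b) monoid_scheme" and n :: nat
  assumes "n > 0" and "odd n"
    and "group G" and "finite (carrier G)"
  shows "pe_graph_iso G (Q8 \<times>\<times> integer_mod_group n) \<longleftrightarrow> G \<cong> Q8 \<times>\<times> integer_mod_group n"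
proof
  assume "G \<cong> Q8 \<times>\<times> integer_mod_group n"
  then show "pe_graph_iso G (Q8 \<times>\<times> integer_mod_group n)"
    using iso_graph_iso[OF assms(3) group_HH] by simp
next
  assume "pe_graph_iso G (Q8 \<times>\<times> integer_mod_group n)"
  then obtain f where f: "bij_betw f (carrier G) (carrier (HH n))"
    "\<And>x y. x \<in> carrier G \<Longrightarrow> y \<in> carrier G \<Longrightarrow> pe_adj G x y \<longleftrightarrow> pe_adj (HH n) (f x) (f y)"
    unfolding pe_graph_iso_def by blast
  interpret G: group G by (rule assms(3))
  have fx: "x \<in> carrier G \<Longrightarrow> f x \<in> carrier (HH n)" for x using f(1) bij_betwE by blast
  have finj: "inj_on f (carrier G)" using f(1) bij_betw_def by blast
  show "G \<cong> Q8 \<times>\<times> integer_mod_group n"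
  proof (rule qg.qg_iso)
    show "qg G (\<lambda>x. cls (f x)) n"
    proof (unfold_locales)
      show "finite (carrier G)" by (rule assms(4))
      show "0 < n" by (rule assms(1))
      show "odd n" by (rule assms(2))
      show "cls (f x) < 4" if "x \<in> carrier G" for x
        using fx[OF that] assms(1) by (auto simp: HHc cls_def)
      show "(\<exists>g\<in>carrier G. x \<in> generate G {g} \<and> y \<in> generate G {g}) \<longleftrightarrow>
          cls (f x) = 0 \<or> cls (f y) = 0 \<or> cls (f x) = cls (f y)"
        if "x \<in> carrier G" "y \<in> carrier G" "x \<noteq> y" for x y
      proof -
        have "f x \<noteq> f y" using finj that by (meson inj_on_def)
        then show ?thesis
          using G.adj_iff[OF assms(4) that(1,2)] f(2)[OF that(1,2)] HH_adj[OF assms(1,2) fx fx] that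
          by auto
      qed
      show "card {x \<in> carrier G. cls (f x) = i} = 2 * n" if "i < 4" for i
      proof -
        have img: "f ` carrier G = carrier (HH n)" using f(1) by (rule bij_betw_imp_surj_on)
        have "f ` {x \<in> carrier G. cls (f x) = i} = {y \<in> carrier (HH n). cls y = i}"
        proof (intro equalityI subsetI)
          fix y assume "y \<in> f ` {x \<in> carrier G. cls (f x) = i}"
          then obtain x where x: "x \<in> carrier G" "cls (f x) = i" "y = f x" by blast
          then show "y \<in> {y \<in> carrier (HH n). cls y = i}" using fx[OF x(1)] by simp
        next
          fix y assume y: "y \<in> {y \<in> carrier (HH n). cls y = i}"
          then have "y \<in> f ` carrier G" unfolding img by simp
          then obtain x where x: "x \<in> carrier G" "y = f x" by (rule imageE) simp
          moreover have "cls (f x) = i" using x y by simp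
          ultimately show "y \<in> f ` {x \<in> carrier G. cls (f x) = i}" by blast
        qed
        moreover have "inj_on f {x \<in> carrier G. cls (f x) = i}" using finj by (rule inj_on_subset) blast
        ultimately show ?thesis using card_cls[OF assms(1) that] card_image[of f "{x \<in> carrier G. cls (f x) = i}"] by simp
      qed
      show "card (carrier G) = 8 * n" using bij_betw_same_card[OF f(1)] card_HH[OF assms(1)] by simp
    qed
  qed
qed

end
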